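(* For coalescing random walks on a finite Markov chain, $P_t=\mathbb{E}(N_t^{-1})$ for every $t\ge0$.
   Context: $(V,\mathbf r)$ is a continuous-time irreducible Markov chain on a finite set $V$ ($|V|=n$) with symmetric rates. Coalescing random walks are realised via the graphical representation: each directed edge $(x,y)$ rings at the times of an independent Poisson process of rate $r_{x,y}$, and every particle at $x$ at such a time moves to $y$. Let $X_1,\dots,X_n$ be the paths of the particles started at the $n$ distinct states (so particles at the same location coincide thereafter). For paths, $\mathcal C(P_1,\dots,P_k)=\inf\{t:P_1(t)=\dots=P_k(t)\}$. Let $\iota$ be uniform on $\{1,\dots,n\}$ independent of everything, and $N_t:=|\{i:\mathcal C(X_i,X_\iota)\le t\}|$. $P_t:=\mathbb{E}|\xi_t|/|V|$ where $\xi_t$ is the set of occupied states at time $t$. *)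

theory Defs
  imports "HOL-Probability.Probability"
begin

text \<open>Graphical representation. A ring configuration R assigns to each directed edge
(x,y) the set R x y of its ring times.\<close>

text \<open>Ring times of a Poisson process given by its interarrival times tau 0, tau 1, ...\<close>
definition arrival_times :: "(nat \<Rightarrow> real) \<Rightarrow> real set" where
  "arrival_times tau = range (\<lambda>k. \<Sum>j\<le>k. tau j)"

definition ring_sets ::
  "('a \<Rightarrow> 'a \<Rightarrow> real) \<Rightarrow> ('a \<Rightarrow> 'a \<Rightarrow> nat \<Rightarrow> real) \<Rightarrow> 'a \<Rightarrow> 'a \<Rightarrow> real set" where
  "ring_sets r tau x y = (if x \<noteq> y \<and> 0 < r x y then arrival_times (tau x y) else {})"

text \<open>Effect of the rings at time s on a particle at z: it moves along the edge that rings
(simultaneous rings happen with probability zero; then an arbitrary choice is made).\<close>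
definition ring_step :: "('a \<Rightarrow> 'a \<Rightarrow> real set) \<Rightarrow> real \<Rightarrow> 'a \<Rightarrow> 'a" where
  "ring_step R s z = (if \<exists>y. z \<noteq> y \<and> s \<in> R z y then (SOME y. z \<noteq> y \<and> s \<in> R z y) else z)"

text \<open>Position at time t of the particle started at x: apply the rings in [0,t] in
chronological order (the set of ring times in [0,t] is finite almost surely).\<close>
definition graphical_path :: "('a \<Rightarrow> 'a \<Rightarrow> real set) \<Rightarrow> 'a \<Rightarrow> real \<Rightarrow> 'a" where
  "graphical_path R x t =
     fold (ring_step R) (sorted_list_of_set {s. 0 \<le> s \<and> s \<le> t \<and> (\<exists>a b. s \<in> R a b)}) x"

definition coal_time :: "(real \<Rightarrow> 'a) \<Rightarrow> (real \<Rightarrow> 'a) \<Rightarrow> ereal" where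
  "coal_time P Q = Inf {ereal t | t. 0 \<le> t \<and> P t = Q t}"

definition irreducible_rates :: "('a \<Rightarrow> 'a \<Rightarrow> real) \<Rightarrow> bool" where
  "irreducible_rates r \<longleftrightarrow> (\<forall>x y. (x, y) \<in> {(a, b). a \<noteq> b \<and> 0 < r a b}\<^sup>*)"

end

theory Submission
  imports Defs
begin


definition ST :: "('a \<Rightarrow> 'a \<Rightarrow> real set) \<Rightarrow> real \<Rightarrow> real set" where
  "ST R t = {s. 0 \<le> s \<and> s \<le> t \<and> (\<exists>a b. s \<in> R a b)}"

lemma gp_def': "graphical_path R x t = fold (ring_step R) (sorted_list_of_set (ST R t)) x"
  by (simp add: graphical_path_def ST_def)

lemma ST_mono: "s \<le> t \<Longrightarrow> ST R s \<subseteq> ST R t"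
  by (auto simp: ST_def)

lemma sl_prefix:
  assumes fin: "finite (ST R t)" and st: "s \<le> t"
  shows "sorted_list_of_set (ST R t) = sorted_list_of_set (ST R s) @ sorted_list_of_set {u \<in> ST R t. s < u}"
proof -
  have fA: "finite (ST R s)" using fin ST_mono[OF st] finite_subset by blast
  have fB: "finite {u \<in> ST R t. s < u}" using fin by simp
  have e: "ST R t = ST R s \<union> {u \<in> ST R t. s < u}" using st by (auto simp: ST_def)
  show ?thesis
  proof (rule strict_sorted_equal)
    show "sorted_wrt (<) (sorted_list_of_set (ST R t))" by (rule strict_sorted_list_of_set)
    show "sorted_wrt (<) (sorted_list_of_set (ST R s) @ sorted_list_of_set {u \<in> ST R t. s < u})"
      unfolding sorted_wrt_append using fA fB
      by (auto simp: strict_sorted_list_of_set ST_def)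
    show "set (sorted_list_of_set (ST R t)) = set (sorted_list_of_set (ST R s) @ sorted_list_of_set {u \<in> ST R t. s < u})"
      using fA fB fin e by simp
  qed
qed

lemma gp_persist:
  assumes fin: "finite (ST R t)" and st: "s \<le> t" and eq: "graphical_path R x s = graphical_path R y s"
  shows "graphical_path R x t = graphical_path R y t"
  using eq unfolding gp_def' sl_prefix[OF fin st] by simp

lemma gp_inf: "infinite (ST R t) \<Longrightarrow> graphical_path R x t = x"
  by (simp add: gp_def')

lemma ST_eq_gp: "ST R s = ST R t \<Longrightarrow> graphical_path R x s = graphical_path R x t"
  by (simp add: gp_def')

lemma coal_le_iff:
  assumes fin: "finite (ST R t)" and t0: "0 \<le> t"
  shows "coal_time (graphical_path R x) (graphical_path R y) \<le> ereal t
     \<longleftrightarrow> graphical_path R x t = graphical_path R y t"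
proof
  assume "graphical_path R x t = graphical_path R y t"
  then show "coal_time (graphical_path R x) (graphical_path R y) \<le> ereal t"
    unfolding coal_time_def using t0 by (intro Inf_lower2[of "ereal t"]) auto
next
  assume H: "coal_time (graphical_path R x) (graphical_path R y) \<le> ereal t"
  let ?C = "{ereal s |s. 0 \<le> s \<and> graphical_path R x s = graphical_path R y s}"
  show "graphical_path R x t = graphical_path R y t"
  proof (cases "x = y")
    case True then show ?thesis by simp
  next
    case xy: False
    have "Inf ?C < ereal (t+1)" using H unfolding coal_time_def by (rule le_less_trans) simp
    then obtain s where s0: "0 \<le> s" and seq: "graphical_path R x s = graphical_path R y s" and s1: "s < t + 1"
      by (auto simp: Inf_less_iff)
    show ?thesis
    proof (cases "s \<le> t")
      case True then show ?thesis using gp_persist[OF fin True seq] by simp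
    next
      case False
      have finS: "finite (ST R s)" using seq xy gp_inf by metis
      define A where "A = {u \<in> ST R s. t < u}"
      have fA: "finite A" using finS by (simp add: A_def)
      show ?thesis
      proof (cases "A = {}")
        case True
        then have "ST R s = ST R t" using False by (auto simp: A_def ST_def)
        then show ?thesis using seq ST_eq_gp by metis
      next
        case Ane: False
        define m where "m = Min A"
        have mA: "m \<in> A" using fA Ane by (simp add: m_def)
        have tm: "t < m" using mA by (simp add: A_def)
        have "Inf ?C < ereal m" using H tm unfolding coal_time_def by (elim le_less_trans) simp
        then obtain s' where s'0: "0 \<le> s'" and seq': "graphical_path R x s' = graphical_path R y s'" and s'm: "s' < m"
          by (auto simp: Inf_less_iff)
        show ?thesis
        proof (cases "s' \<le> t")
          case True then show ?thesis using gp_persist[OF fin True seq'] by simp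
        next
          case False
          have ms: "m \<le> s" using mA by (simp add: A_def ST_def)
          have "ST R s' = ST R t"
          proof
            show "ST R t \<subseteq> ST R s'" using False by (intro ST_mono) simp
            show "ST R s' \<subseteq> ST R t"
            proof
              fix u assume u: "u \<in> ST R s'"
              show "u \<in> ST R t"
              proof (rule ccontr)
                assume "u \<notin> ST R t"
                then have "t < u" using u by (auto simp: ST_def)
                moreover have "u \<in> ST R s" using u s'm ms by (auto simp: ST_def)
                ultimately have "u \<in> A" by (simp add: A_def)
                then have "m \<le> u" using fA by (simp add: m_def)
                moreover have "u \<le> s'" using u by (simp add: ST_def)
                ultimately show False using s'm by simp
              qed
            qed
          qed
          then show ?thesis using seq' ST_eq_gp by metis
        qed
      qed
    qed
  qed
qed

lemma ST_reduce:
  assumes fin: "finite (ST R s)" and st: "s \<le> t" and s0: "0 \<le> s"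
  shows "\<exists>s0 \<in> insert 0 (ST R t). ST R s0 = ST R s"
proof (cases "ST R s = {}")
  case True
  have "ST R 0 = {}" using True s0 by (auto simp: ST_def)
  then show ?thesis using True by auto
next
  case False
  define m where "m = Max (ST R s)"
  have mS: "m \<in> ST R s" using fin False by (simp add: m_def)
  have "ST R m = ST R s"
  proof
    show "ST R m \<subseteq> ST R s" using mS by (intro ST_mono) (simp add: ST_def)
    show "ST R s \<subseteq> ST R m"
    proof
      fix u assume u: "u \<in> ST R s"
      have "u \<le> m" unfolding m_def using fin u by (rule Max_ge)
      then show "u \<in> ST R m" using u unfolding ST_def by blast
    qed
  qed
  moreover have "m \<in> ST R t" using mS st by (auto simp: ST_def)
  ultimately show ?thesis by blast
qed

lemma coal_le_char:
  assumes t0: "0 \<le> t"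
  shows "coal_time (graphical_path R x) (graphical_path R y) \<le> ereal t
     \<longleftrightarrow> x = y \<or> (\<exists>s \<in> insert 0 (ST R t). finite (ST R s) \<and> graphical_path R x s = graphical_path R y s)"
proof
  assume H: "coal_time (graphical_path R x) (graphical_path R y) \<le> ereal t"
  let ?C = "{ereal s |s. 0 \<le> s \<and> graphical_path R x s = graphical_path R y s}"
  show "x = y \<or> (\<exists>s \<in> insert 0 (ST R t). finite (ST R s) \<and> graphical_path R x s = graphical_path R y s)"
  proof (cases "x = y")
    case True then show ?thesis by simp
  next
    case xy: False
    have "Inf ?C < ereal (t+1)" using H unfolding coal_time_def by (rule le_less_trans) simp
    then obtain s where s0: "0 \<le> s" and seq: "graphical_path R x s = graphical_path R y s" and s1: "s < t + 1"
      by (auto simp: Inf_less_iff)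
    have finS: "finite (ST R s)" using seq xy gp_inf by metis
    obtain s2 where s2: "s2 \<le> t" "0 \<le> s2" "finite (ST R s2)" "graphical_path R x s2 = graphical_path R y s2"
    proof (cases "s \<le> t")
      case True then show ?thesis using that finS seq s0 by blast
    next
      case False
      have fT: "finite (ST R t)" using finS ST_mono[of t s R] False by (meson finite_subset nle_le)
      have "graphical_path R x t = graphical_path R y t" using coal_le_iff[OF fT t0] H by simp
      then show ?thesis using that fT t0 by blast
    qed
    obtain s0 where "s0 \<in> insert 0 (ST R t)" "ST R s0 = ST R s2" using ST_reduce[OF s2(3) s2(1) s2(2)] by blast
    then show ?thesis using s2 ST_eq_gp by metis
  qed
next
  assume "x = y \<or> (\<exists>s \<in> insert 0 (ST R t). finite (ST R s) \<and> graphical_path R x s = graphical_path R y s)"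
  then show "coal_time (graphical_path R x) (graphical_path R y) \<le> ereal t"
  proof
    assume "x = y" then show ?thesis
      unfolding coal_time_def using t0 by (intro Inf_lower2[of "ereal 0"]) auto
  next
    assume "\<exists>s \<in> insert 0 (ST R t). finite (ST R s) \<and> graphical_path R x s = graphical_path R y s"
    then obtain s where "s \<in> insert 0 (ST R t)" "graphical_path R x s = graphical_path R y s" by blast
    then show ?thesis
      unfolding coal_time_def using t0 by (intro Inf_lower2[of "ereal s"]) (auto simp: ST_def)
  qed
qed



definition RS :: "('a \<times> 'a) set \<Rightarrow> (('a \<times> 'a) \<times> nat \<Rightarrow> real) \<Rightarrow> 'a \<Rightarrow> 'a \<Rightarrow> real set" where
  "RS Act q a b = (if (a, b) \<in> Act then range (\<lambda>k. q ((a, b), k)) else {})"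

definition Bdet :: "('a \<times> 'a) set \<Rightarrow> (('a \<times> 'a) \<times> nat \<Rightarrow> real) \<Rightarrow> real
    \<Rightarrow> (('a \<times> 'a) \<times> nat) list \<Rightarrow> ('a \<times> 'a) set list \<Rightarrow> bool" where
  "Bdet Act q u ix L \<longleftrightarrow> set ix \<subseteq> Act \<times> UNIV \<and> length L = length ix \<and>
     (\<forall>j<length ix. \<forall>k<length ix. j < k \<longrightarrow> q (ix!j) < q (ix!k)) \<and>
     (\<forall>j<length ix. 0 \<le> q (ix!j) \<and> q (ix!j) \<le> u) \<and>
     (\<forall>e\<in>Act. \<forall>k. 0 \<le> q (e,k) \<and> q (e,k) \<le> u \<longrightarrow> (\<exists>j<length ix. q (ix!j) = q (e,k))) \<and>
     (\<forall>j<length ix. \<forall>a b. (a,b) \<in> L!j \<longleftrightarrow> ((a,b) \<in> Act \<and> (\<exists>k. q ((a,b),k) = q (ix!j))))"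

definition edgesat :: "('a \<Rightarrow> 'a \<Rightarrow> real set) \<Rightarrow> real \<Rightarrow> ('a \<times> 'a) set" where
  "edgesat R s = {(a,b). s \<in> R a b}"

lemma in_RS: "s \<in> RS Act q a b \<longleftrightarrow> (a,b) \<in> Act \<and> (\<exists>k. q ((a,b),k) = s)"
  by (auto simp: RS_def)

lemma Bdet_char:
  "(finite (ST (RS Act q) u) \<and> map (edgesat (RS Act q)) (sorted_list_of_set (ST (RS Act q) u)) = L)
   \<longleftrightarrow> (\<exists>ix. Bdet Act q u ix L)"
proof
  let ?R = "RS Act q"
  assume A: "finite (ST ?R u) \<and> map (edgesat ?R) (sorted_list_of_set (ST ?R u)) = L"
  define ss where "ss = sorted_list_of_set (ST ?R u)"
  have fin: "finite (ST ?R u)" using A by simp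
  have setss: "set ss = ST ?R u" using A by (simp add: ss_def)
  have sss: "sorted_wrt (<) ss" by (simp add: ss_def strict_sorted_list_of_set)
  have ex: "\<exists>i. i \<in> Act \<times> UNIV \<and> q i = s" if "s \<in> ST ?R u" for s
    using that by (auto simp: ST_def RS_def split: if_splits)
  define w where "w s = (SOME i. i \<in> Act \<times> UNIV \<and> q i = s)" for s
  have w: "w s \<in> Act \<times> UNIV \<and> q (w s) = s" if "s \<in> ST ?R u" for s
    unfolding w_def using someI_ex[OF ex[OF that]] .
  define ix where "ix = map w ss"
  have mq: "map q ix = ss" unfolding ix_def using w setss by (auto intro: map_idI)
  have qn: "q (ix!j) = ss!j" if "j < length ix" for j
    using that mq by (metis length_map nth_map)
  have Lss: "L = map (edgesat ?R) ss" using A by (simp add: ss_def)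
  have "Bdet Act q u ix L"
    unfolding Bdet_def
  proof (intro conjI allI impI ballI)
    show "set ix \<subseteq> Act \<times> UNIV" using w setss unfolding ix_def by fastforce
    show "length L = length ix" by (simp add: Lss ix_def)
    fix j assume j: "j < length ix"
    then have jss: "j < length ss" by (simp add: ix_def)
    then have ssj: "ss!j \<in> ST ?R u" using setss nth_mem by blast
    show "0 \<le> q (ix!j)" "q (ix!j) \<le> u" using ssj qn[OF j] by (auto simp: ST_def)
    { fix k assume "k < length ix" "j < k"
      then show "q (ix!j) < q (ix!k)" using qn j sss by (simp add: sorted_wrt_iff_nth_less ix_def) }
    fix a b
    show "(a,b) \<in> L!j \<longleftrightarrow> ((a,b) \<in> Act \<and> (\<exists>k. q ((a,b),k) = q (ix!j)))"
      using jss qn[OF j] by (simp add: Lss edgesat_def in_RS)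
  next
    fix e k assume e: "e \<in> Act" and b: "0 \<le> q (e,k) \<and> q (e,k) \<le> u"
    have "q (e,k) \<in> ST ?R u" using e b unfolding ST_def RS_def by (cases e) auto
    then obtain j where "j < length ss" "ss!j = q (e,k)" using setss by (metis in_set_conv_nth)
    then show "\<exists>j<length ix. q (ix!j) = q (e,k)" using qn by (metis ix_def length_map)
  qed
  then show "\<exists>ix. Bdet Act q u ix L" by blast
next
  let ?R = "RS Act q"
  assume "\<exists>ix. Bdet Act q u ix L"
  then obtain ix where B: "Bdet Act q u ix L" by blast
  define ss where "ss = map q ix"
  have sss: "sorted_wrt (<) ss" using B by (auto simp: Bdet_def ss_def sorted_wrt_iff_nth_less)
  have setss: "set ss = ST ?R u"
  proof
    show "set ss \<subseteq> ST ?R u"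
    proof
      fix s assume "s \<in> set ss"
      then obtain j where j: "j < length ix" "s = q (ix!j)" by (auto simp: ss_def in_set_conv_nth)
      have "ix!j \<in> Act \<times> UNIV" using B j(1) nth_mem unfolding Bdet_def by blast
      then obtain a b k where "ix!j = ((a,b),k)" "(a,b) \<in> Act" by auto
      then show "s \<in> ST ?R u" using B j unfolding ST_def Bdet_def by (auto simp: in_RS)
    qed
    show "ST ?R u \<subseteq> set ss"
    proof
      fix s assume "s \<in> ST ?R u"
      then obtain a b k where "(a,b) \<in> Act" "s = q ((a,b),k)" "0 \<le> s" "s \<le> u"
        by (auto simp: ST_def in_RS)
      then obtain j where "j < length ix" "q (ix!j) = s" using B unfolding Bdet_def by blast
      then show "s \<in> set ss" by (auto simp: ss_def)
    qed
  qed
  have fin: "finite (ST ?R u)" using setss[symmetric] by simp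
  have sl: "sorted_list_of_set (ST ?R u) = ss"
    proof -
    have "sorted_list_of_set (set ss) = ss" using sss
      by (simp add: strict_sorted_iff sorted_list_of_set.idem_if_sorted_distinct)
    then show ?thesis using setss by simp
  qed
  have "map (edgesat ?R) ss = L"
  proof (rule nth_equalityI)
    show "length (map (edgesat ?R) ss) = length L" using B by (simp add: Bdet_def ss_def)
    fix j assume "j < length (map (edgesat ?R) ss)"
    then have j: "j < length ix" by (simp add: ss_def)
    show "map (edgesat ?R) ss ! j = L ! j"
      using B j by (auto simp: Bdet_def ss_def edgesat_def in_RS)
  qed
  then show "finite (ST ?R u) \<and> map (edgesat ?R) (sorted_list_of_set (ST ?R u)) = L"
    using fin sl by simp
qed



definition stepE :: "('a \<times> 'a) set \<Rightarrow> 'a \<Rightarrow> 'a" where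
  "stepE E z = (if \<exists>y. z \<noteq> y \<and> (z,y) \<in> E then SOME y. z \<noteq> y \<and> (z,y) \<in> E else z)"

lemma ring_step_eq: "ring_step R s = stepE (edgesat R s)"
  by (auto simp: fun_eq_iff ring_step_def stepE_def edgesat_def)

lemma ring_step_eq': "ring_step R = (\<lambda>s. stepE (edgesat R s))"
  using ring_step_eq by blast

lemma fin_char: "finite (ST (RS Act q) u) \<longleftrightarrow> (\<exists>ix L. Bdet Act q u ix L)"
  using Bdet_char[of Act q u] by blast

lemma gp_char:
  "graphical_path (RS Act q) x u = y \<longleftrightarrow>
     (\<not> (\<exists>ix L. Bdet Act q u ix L) \<and> x = y) \<or> (\<exists>ix L. Bdet Act q u ix L \<and> fold stepE L x = y)"
proof (cases "finite (ST (RS Act q) u)")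
  case True
  define L where "L = map (edgesat (RS Act q)) (sorted_list_of_set (ST (RS Act q) u))"
  have gp: "graphical_path (RS Act q) x u = fold stepE L x"
    by (simp add: gp_def' L_def fold_map ring_step_eq' comp_def)
  have "Bdet Act q u ix L' \<longleftrightarrow> (Bdet Act q u ix L' \<and> L' = L)" for ix L'
    using Bdet_char[of Act q u L'] L_def by blast
  moreover have "\<exists>ix. Bdet Act q u ix L" using Bdet_char[of Act q u L] True L_def by blast
  ultimately show ?thesis using gp by metis
next
  case False
  then show ?thesis using gp_inf fin_char by metis
qed

lemma Bdet_pred:
  fixes q :: "('a::finite \<times> 'a) \<times> nat \<Rightarrow> 'm \<Rightarrow> real"
  assumes [measurable]: "\<And>i. q i \<in> borel_measurable N" "u \<in> borel_measurable N"
  shows "Measurable.pred N (\<lambda>\<omega>. Bdet Act (\<lambda>i. q i \<omega>) (u \<omega>) ix L)"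
  unfolding Bdet_def by measurable

lemma fin_pred:
  fixes q :: "('a::finite \<times> 'a) \<times> nat \<Rightarrow> 'm \<Rightarrow> real"
  assumes [measurable]: "\<And>i. q i \<in> borel_measurable N" "u \<in> borel_measurable N"
  shows "Measurable.pred N (\<lambda>\<omega>. finite (ST (RS Act (\<lambda>i. q i \<omega>)) (u \<omega>)))"
proof -
  note [measurable] = Bdet_pred[OF assms]
  show ?thesis unfolding fin_char by measurable
qed

lemma gp_meas:
  fixes q :: "('a::finite \<times> 'a) \<times> nat \<Rightarrow> 'm \<Rightarrow> real"
  assumes [measurable]: "\<And>i. q i \<in> borel_measurable N" "u \<in> borel_measurable N"
  shows "(\<lambda>\<omega>. graphical_path (RS Act (\<lambda>i. q i \<omega>)) x (u \<omega>)) \<in> measurable N (count_space UNIV)"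
proof -
  note [measurable] = Bdet_pred[OF assms]
  have "Measurable.pred N (\<lambda>\<omega>. graphical_path (RS Act (\<lambda>i. q i \<omega>)) x (u \<omega>) = y)" for y
    unfolding gp_char by measurable
  then show ?thesis
    by (subst measurable_count_space_eq2) (auto simp: pred_def vimage_def Int_def Collect_conj_eq[symmetric] conj_commute)
qed



lemma fiber_sum:
  fixes g :: "'a::finite \<Rightarrow> 'b"
  shows "(\<Sum>v\<in>UNIV. 1 / real (card {i. g i = g v})) = real (card (range g))"
proof -
  have "(\<Sum>v\<in>UNIV. 1 / real (card {i. g i = g v}))
      = (\<Sum>w\<in>range g. \<Sum>v\<in>{v \<in> UNIV. g v = w}. 1 / real (card {i. g i = g v}))"
    by (rule sum.group[symmetric]) auto
  also have "\<dots> = (\<Sum>w\<in>range g. 1)"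
  proof (rule sum.cong[OF refl])
    fix w assume "w \<in> range g"
    then have ne: "{v. g v = w} \<noteq> {}" by auto
    have "(\<Sum>v\<in>{v \<in> UNIV. g v = w}. 1 / real (card {i. g i = g v}))
        = (\<Sum>v\<in>{v. g v = w}. 1 / real (card {v. g v = w}))" by (intro sum.cong) auto
    also have "\<dots> = 1" using ne by (simp add: card_eq_0_iff)
    finally show "(\<Sum>v\<in>{v \<in> UNIV. g v = w}. 1 / real (card {i. g i = g v})) = 1" .
  qed
  also have "\<dots> = real (card (range g))" by simp
  finally show ?thesis .
qed

lemma integral_finite_rv:
  fixes F :: "'m \<Rightarrow> 'y::finite" and \<phi> :: "'y \<Rightarrow> real"
  assumes "prob_space M" and F: "F \<in> measurable M (count_space UNIV)"
  shows "(\<integral>\<omega>. \<phi> (F \<omega>) \<partial>M) = (\<Sum>y\<in>UNIV. \<phi> y * measure M (F -` {y} \<inter> space M))"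
proof -
  interpret prob_space M by fact
  have sets: "F -` {y} \<inter> space M \<in> sets M" for y
    using F by (simp add: measurable_count_space_eq2)
  have "(\<integral>\<omega>. \<phi> (F \<omega>) \<partial>M) = (\<integral>\<omega>. (\<Sum>y\<in>UNIV. \<phi> y * indicator (F -` {y} \<inter> space M) \<omega>) \<partial>M)"
  proof (rule Bochner_Integration.integral_cong[OF refl])
    fix \<omega> assume "\<omega> \<in> space M"
    then have "(\<Sum>y\<in>UNIV. \<phi> y * indicator (F -` {y} \<inter> space M) \<omega>) = (\<Sum>y\<in>{F \<omega>}. \<phi> y * indicator (F -` {y} \<inter> space M) \<omega>)"
      by (intro sum.mono_neutral_right) (auto simp: indicator_def)
    then show "\<phi> (F \<omega>) = (\<Sum>y\<in>UNIV. \<phi> y * indicator (F -` {y} \<inter> space M) \<omega>)"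
      using \<open>\<omega> \<in> space M\<close> by simp
  qed
  also have "\<dots> = (\<Sum>y\<in>UNIV. \<integral>\<omega>. \<phi> y * indicator (F -` {y} \<inter> space M) \<omega> \<partial>M)"
    by (rule Bochner_Integration.integral_sum[where f="\<lambda>y \<omega>. \<phi> y * indicator (F -` {y} \<inter> space M) \<omega>"])
       (auto intro!: integrable_mult_right integrable_real_indicator sets simp: emeasure_eq_measure)
  also have "\<dots> = (\<Sum>y\<in>UNIV. \<phi> y * measure M (F -` {y} \<inter> space M))"
    using sets by (simp add: measure_def[symmetric])
  finally show ?thesis .
qed



lemma (in prob_space) ae_psum_big:
  fixes Y :: "'i \<Rightarrow> 'a \<Rightarrow> real" and f :: "nat \<Rightarrow> 'i"
  assumes indep: "indep_vars (\<lambda>_. borel) Y I" and inj: "inj f" and fI: "range f \<subseteq> I"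
    and dist: "\<And>k. distributed M lborel (Y (f k)) (exponential_density l)"
    and l: "0 < l" and t: "0 \<le> t"
  shows "AE \<omega> in M. \<exists>K. \<forall>k\<ge>K. t < (\<Sum>j\<le>k. Y (f j) \<omega>)"
proof -
  define X where "X k = Y (f k)" for k
  have Xm[measurable]: "X k \<in> borel_measurable M" for k
    using distributed_measurable[OF dist[of k]] unfolding X_def by (simp add: measurable_lborel2)
  have pos1: "AE \<omega> in M. 0 < X k \<omega>" for k
  proof -
    have ev: "{\<omega> \<in> space M. 0 < X k \<omega>} \<in> events" by measurable
    have "prob {\<omega> \<in> space M. 0 < X k \<omega>} = 1"
      using exponential_distributedD_gt[OF dist[of k] order_refl l] by (simp add: X_def)
    then have "AE \<omega> in M. \<omega> \<in> {\<omega> \<in> space M. 0 < X k \<omega>}" using AE_in_set_eq_1[OF ev] by simp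
    then show ?thesis by simp
  qed
  have pos: "AE \<omega> in M. \<forall>k. 0 < X k \<omega>" using pos1 by (simp add: AE_all_countable)
  define \<rho> where "\<rho> = 1 - exp (- t * l)"
  have \<rho>1: "\<rho> < 1" by (simp add: \<rho>_def)
  have \<rho>0: "0 \<le> \<rho>" using t l by (simp add: \<rho>_def)
  define C where "C K = {\<omega> \<in> space M. \<forall>j\<le>K. X j \<omega> \<le> t}" for K
  have probC: "prob (C K) = \<rho> ^ Suc K" for K
  proof -
    have ind: "indep_sets (\<lambda>i. {Y i -` A \<inter> space M | A. A \<in> sets borel}) I"
      using indep unfolding indep_vars_def2 by simp
    have "prob (\<Inter>i\<in>f ` {..K}. Y i -` {..t} \<inter> space M) = (\<Prod>i\<in>f ` {..K}. prob (Y i -` {..t} \<inter> space M))"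
      by (rule indep_setsD[OF ind]) (use fI in \<open>auto intro!: exI[of _ "{..t}"]\<close>)
    moreover have "(\<Inter>i\<in>f ` {..K}. Y i -` {..t} \<inter> space M) = C K"
      by (auto simp: C_def X_def)
    moreover have "(\<Prod>i\<in>f ` {..K}. prob (Y i -` {..t} \<inter> space M)) = (\<Prod>j\<le>K. prob (X j -` {..t} \<inter> space M))"
      using inj by (simp add: prod.reindex inj_on_def X_def)
    moreover have "prob (X j -` {..t} \<inter> space M) = \<rho>" for j
    proof -
      have "X j -` {..t} \<inter> space M = {\<omega> \<in> space M. X j \<omega> \<le> t}" by auto
      then show ?thesis using exponential_distributedD_le[OF dist[of j] t l] by (simp add: X_def \<rho>_def)
    qed
    ultimately show ?thesis by simp
  qed
  define B where "B = {\<omega> \<in> space M. (\<forall>k. 0 < X k \<omega>) \<and> (\<forall>k. (\<Sum>j\<le>k. X j \<omega>) \<le> t)}"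
  have Bs: "B \<in> events" unfolding B_def by measurable
  have BC: "B \<subseteq> C K" for K
  proof
    fix \<omega> assume "\<omega> \<in> B"
    then have p: "\<And>k. 0 < X k \<omega>" and s: "\<And>k. (\<Sum>j\<le>k. X j \<omega>) \<le> t" and sp: "\<omega> \<in> space M"
      by (auto simp: B_def)
    have "X j \<omega> \<le> t" for j
    proof -
      have "X j \<omega> \<le> (\<Sum>i\<le>j. X i \<omega>)" using p by (intro member_le_sum) (auto intro: less_imp_le)
      then show ?thesis using s[of j] by simp
    qed
    then show "\<omega> \<in> C K" using sp by (simp add: C_def)
  qed
  have "prob B = 0"
  proof (rule ccontr)
    assume "prob B \<noteq> 0"
    then have "0 < prob B" using measure_nonneg[of M B] by linarith
    then obtain n where n: "\<rho> ^ n < prob B" using real_arch_pow_inv \<rho>1 by blast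
    have "prob B \<le> prob (C n)" using BC[of n] by (intro finite_measure_mono) (auto simp: C_def)
    also have "\<dots> = \<rho> ^ Suc n" by (rule probC)
    also have "\<dots> \<le> \<rho> ^ n" using \<rho>0 \<rho>1 by (simp add: mult_left_le_one_le)
    finally show False using n by simp
  qed
  then have Bnull: "B \<in> null_sets M" using Bs by (simp add: null_sets_def emeasure_eq_measure)
  have "AE \<omega> in M. \<omega> \<notin> B" using Bnull by (rule AE_not_in)
  then show ?thesis using pos AE_space
  proof eventually_elim
    case (elim \<omega>)
    then obtain K where K: "t < (\<Sum>j\<le>K. X j \<omega>)" by (auto simp: B_def not_le)
    have "t < (\<Sum>j\<le>k. Y (f j) \<omega>)" if "K \<le> k" for k
    proof -
      have "(\<Sum>j\<le>K. X j \<omega>) \<le> (\<Sum>j\<le>k. X j \<omega>)"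
        using that elim by (intro sum_mono2) (auto intro: less_imp_le)
      then show ?thesis using K by (simp add: X_def)
    qed
    then show ?case by blast
  qed
qed



lemma ST_RS_mem: "s \<in> ST (RS Act q) t \<longleftrightarrow> 0 \<le> s \<and> s \<le> t \<and> (\<exists>e\<in>Act. \<exists>k. q (e,k) = s)"
  by (auto simp: ST_def in_RS)

lemma coal_le_char2:
  assumes t0: "0 \<le> t"
  shows "coal_time (graphical_path (RS Act q) x) (graphical_path (RS Act q) y) \<le> ereal t
   \<longleftrightarrow> x = y \<or> (finite (ST (RS Act q) 0) \<and> graphical_path (RS Act q) x 0 = graphical_path (RS Act q) y 0)
     \<or> (\<exists>e\<in>Act. \<exists>k. 0 \<le> q (e,k) \<and> q (e,k) \<le> t \<and> finite (ST (RS Act q) (q (e,k)))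
          \<and> graphical_path (RS Act q) x (q (e,k)) = graphical_path (RS Act q) y (q (e,k)))"
  unfolding coal_le_char[OF t0] Bex_def insert_iff ST_RS_mem by blast

lemma pred_eq_count:
  fixes f g :: "'m \<Rightarrow> 'a::finite"
  assumes "f \<in> measurable M (count_space UNIV)" "g \<in> measurable M (count_space UNIV)"
  shows "Measurable.pred M (\<lambda>\<omega>. f \<omega> = g \<omega>)"
proof -
  have e: "(\<lambda>\<omega>. f \<omega> = g \<omega>) = (\<lambda>\<omega>. \<exists>z. f \<omega> = z \<and> g \<omega> = z)" by auto
  show ?thesis unfolding e using assms by measurable
qed



theorem lemma2p1:
  fixes M :: "'m measure"
    and r :: "'a::finite \<Rightarrow> 'a \<Rightarrow> real"
    and tau :: "'a \<Rightarrow> 'a \<Rightarrow> nat \<Rightarrow> 'm \<Rightarrow> real"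
    and iota :: "'m \<Rightarrow> 'a"
    and t :: real
  assumes "prob_space M"
    and rates_nonneg: "\<And>x y. 0 \<le> r x y"
    and rates_sym: "\<And>x y. r x y = r y x"
    and irred: "irreducible_rates r"
    and exp_interarrival: "\<And>x y k. x \<noteq> y \<Longrightarrow> 0 < r x y \<Longrightarrow>
        distributed M lborel (tau x y k) (exponential_density (r x y))"
    and indep_tau: "prob_space.indep_vars M (\<lambda>_. borel) (\<lambda>(x, y, k). tau x y k)
        {(x, y, k). x \<noteq> y \<and> 0 < r x y}"
    and iota_meas: "iota \<in> measurable M (count_space UNIV)"
    and iota_unif: "\<And>v. measure M {\<omega> \<in> space M. iota \<omega> = v} = 1 / real CARD('a)"
    and iota_indep: "prob_space.indep_set M
        (sigma_sets (space M) {iota -` {v} \<inter> space M | v. True})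
        (sigma_sets (space M) {tau x y k -` B \<inter> space M | x y k B.
            x \<noteq> y \<and> 0 < r x y \<and> B \<in> sets borel})"
    and "0 \<le> t"
  shows "(\<integral>\<omega>. real (card {graphical_path (ring_sets r (\<lambda>x y k. tau x y k \<omega>)) x t | x. True}) \<partial>M)
           / real CARD('a)
       = (\<integral>\<omega>. 1 / real (card {i. coal_time (graphical_path (ring_sets r (\<lambda>x y k. tau x y k \<omega>)) i)
                                       (graphical_path (ring_sets r (\<lambda>x y k. tau x y k \<omega>)) (iota \<omega>))
                                 \<le> ereal t}) \<partial>M)"
proof -
  interpret prob_space M by fact
  note t0 = \<open>0 \<le> t\<close>
  define Act where "Act = {(x, y). x \<noteq> y \<and> 0 < r x y}"
  define q where "q i \<omega> = (if fst i \<in> Act then (\<Sum>j\<le>snd i. tau (fst (fst i)) (snd (fst i)) j \<omega>) else 0)"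
    for i :: "('a \<times> 'a) \<times> nat" and \<omega>
  have Rw_eq: "ring_sets r (\<lambda>x y k. tau x y k \<omega>) = RS Act (\<lambda>i. q i \<omega>)" for \<omega>
    by (auto simp: fun_eq_iff ring_sets_def RS_def arrival_times_def Act_def q_def)
  define Gen where "Gen = {tau x y k -` B \<inter> space M | x y k B. x \<noteq> y \<and> 0 < r x y \<and> B \<in> sets borel}"
  define N where "N = sigma (space M) Gen"
  have GenP: "Gen \<subseteq> Pow (space M)" by (auto simp: Gen_def)
  have sN: "sets N = sigma_sets (space M) Gen" using GenP by (simp add: N_def)
  have spN: "space N = space M" using GenP by (simp add: N_def)
  have tauM: "tau x y k \<in> borel_measurable M" if "(x, y) \<in> Act" for x y k
    using distributed_measurable[OF exp_interarrival[of x y k]] that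
    by (simp add: Act_def measurable_lborel2)
  have GenM: "Gen \<subseteq> sets M"
    using tauM by (auto simp: Gen_def Act_def)
  have sub: "subalgebra M N"
    unfolding subalgebra_def using sN spN GenM by (simp add: sets.sigma_sets_subset)
  have tauN: "tau x y k \<in> borel_measurable N" if "(x, y) \<in> Act" for x y k
  proof (rule measurableI)
    fix A :: "real set" assume "A \<in> sets borel"
    then have "tau x y k -` A \<inter> space M \<in> Gen" using that by (auto simp: Gen_def Act_def)
    then show "tau x y k -` A \<inter> space N \<in> sets N" by (simp add: sN spN)
  qed simp
  have qN[measurable]: "q i \<in> borel_measurable N" for i
  proof -
    obtain a b k where i: "i = ((a, b), k)" by (metis prod.collapse)
    show ?thesis
    proof (cases "(a, b) \<in> Act")
      case True
      then have "q i = (\<lambda>\<omega>. \<Sum>j\<le>k. tau a b j \<omega>)" by (simp add: fun_eq_iff q_def i)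
      then show ?thesis using tauN[OF True] by simp
    next
      case False
      then have "q i = (\<lambda>\<omega>. 0)" by (simp add: fun_eq_iff q_def i)
      then show ?thesis by simp
    qed
  qed
  have qM[measurable]: "q i \<in> borel_measurable M" for i
    by (rule measurable_from_subalg[OF sub qN])
  define G where "G \<omega> = (\<lambda>x. graphical_path (RS Act (\<lambda>i. q i \<omega>)) x t)" for \<omega>
  have GN: "G \<in> measurable N (count_space UNIV)"
  proof -
    have [measurable]: "(\<lambda>\<omega>. graphical_path (RS Act (\<lambda>i. q i \<omega>)) x t) \<in> measurable N (count_space UNIV)" for x
      by (rule gp_meas) auto
    have "Measurable.pred N (\<lambda>\<omega>. G \<omega> = \<phi>)" for \<phi>
      unfolding G_def fun_eq_iff by measurable
    then show ?thesis
      by (subst measurable_count_space_eq2) (auto simp: pred_def vimage_def Int_def Collect_conj_eq[symmetric] conj_commute)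
  qed
  have GM[measurable]: "G \<in> measurable M (count_space UNIV)"
    by (rule measurable_from_subalg[OF sub GN])
  have Gsets: "G -` {\<phi>} \<inter> space M \<in> sigma_sets (space M) Gen" for \<phi>
    using GN by (simp add: measurable_count_space_eq2 sN spN)
  define n where "n = real CARD('a)"
  have n0: "0 < n" by (simp add: n_def)
  define P where "P \<phi> = measure M (G -` {\<phi>} \<inter> space M)" for \<phi>
  have LHS: "(\<integral>\<omega>. real (card {graphical_path (ring_sets r (\<lambda>x y k. tau x y k \<omega>)) x t | x. True}) \<partial>M)
      = (\<Sum>\<phi>\<in>UNIV. real (card (range \<phi>)) * P \<phi>)"
  proof -
    have "{graphical_path (ring_sets r (\<lambda>x y k. tau x y k \<omega>)) x t | x. True} = range (G \<omega>)" for \<omega>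
      by (auto simp: G_def Rw_eq)
    then have "(\<integral>\<omega>. real (card {graphical_path (ring_sets r (\<lambda>x y k. tau x y k \<omega>)) x t | x. True}) \<partial>M)
       = (\<integral>\<omega>. (\<lambda>\<phi>. real (card (range \<phi>))) (G \<omega>) \<partial>M)" by simp
    also have "\<dots> = (\<Sum>\<phi>\<in>UNIV. real (card (range \<phi>)) * P \<phi>)"
      unfolding P_def by (rule integral_finite_rv[OF \<open>prob_space M\<close> GM])
    finally show ?thesis .
  qed
  define K where "K \<omega> = {i. coal_time (graphical_path (RS Act (\<lambda>i. q i \<omega>)) i)
      (graphical_path (RS Act (\<lambda>i. q i \<omega>)) (iota \<omega>)) \<le> ereal t}" for \<omega>
  have RHS0: "(\<integral>\<omega>. 1 / real (card {i. coal_time (graphical_path (ring_sets r (\<lambda>x y k. tau x y k \<omega>)) i)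
                                       (graphical_path (ring_sets r (\<lambda>x y k. tau x y k \<omega>)) (iota \<omega>))
                                 \<le> ereal t}) \<partial>M) = (\<integral>\<omega>. 1 / real (card (K \<omega>)) \<partial>M)"
    by (simp add: K_def Rw_eq)
  have KM: "K \<in> measurable M (count_space UNIV)"
  proof -
    have gpq[measurable]: "(\<lambda>\<omega>. graphical_path (RS Act (\<lambda>i. q i \<omega>)) x (q e \<omega>)) \<in> measurable M (count_space UNIV)" for x e
      by (rule gp_meas) auto
    have gp0[measurable]: "(\<lambda>\<omega>. graphical_path (RS Act (\<lambda>i. q i \<omega>)) x 0) \<in> measurable M (count_space UNIV)" for x
      by (rule gp_meas) auto
    have [measurable]: "Measurable.pred M (\<lambda>\<omega>. finite (ST (RS Act (\<lambda>i. q i \<omega>)) (q e \<omega>)))" for e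
      by (rule fin_pred) auto
    have [measurable]: "Measurable.pred M (\<lambda>\<omega>. finite (ST (RS Act (\<lambda>i. q i \<omega>)) 0))"
      by (rule fin_pred) auto
    have [measurable]: "Measurable.pred M (\<lambda>\<omega>. graphical_path (RS Act (\<lambda>i. q i \<omega>)) x (q e \<omega>)
        = graphical_path (RS Act (\<lambda>i. q i \<omega>)) y (q e \<omega>))" for x y e
      by (rule pred_eq_count) (rule gpq)+
    have [measurable]: "Measurable.pred M (\<lambda>\<omega>. graphical_path (RS Act (\<lambda>i. q i \<omega>)) x 0
        = graphical_path (RS Act (\<lambda>i. q i \<omega>)) y 0)" for x y
      by (rule pred_eq_count) (rule gp0)+
    note iota_meas[measurable]
    have mem: "Measurable.pred M (\<lambda>\<omega>. i \<in> K \<omega>)" for i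
    proof -
      have e: "(\<lambda>\<omega>. i \<in> K \<omega>) = (\<lambda>\<omega>. \<exists>v. iota \<omega> = v \<and> (i = v \<or>
          (finite (ST (RS Act (\<lambda>i. q i \<omega>)) 0) \<and> graphical_path (RS Act (\<lambda>i. q i \<omega>)) i 0 = graphical_path (RS Act (\<lambda>i. q i \<omega>)) v 0)
     \<or> (\<exists>e\<in>Act. \<exists>k. 0 \<le> q (e,k) \<omega> \<and> q (e,k) \<omega> \<le> t \<and> finite (ST (RS Act (\<lambda>i. q i \<omega>)) (q (e,k) \<omega>))
          \<and> graphical_path (RS Act (\<lambda>i. q i \<omega>)) i (q (e,k) \<omega>) = graphical_path (RS Act (\<lambda>i. q i \<omega>)) v (q (e,k) \<omega>))))"
        unfolding K_def mem_Collect_eq coal_le_char2[OF t0] by blast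
      show ?thesis unfolding e by measurable
    qed
    have "Measurable.pred M (\<lambda>\<omega>. K \<omega> = A)" for A
    proof -
      have e: "(\<lambda>\<omega>. K \<omega> = A) = (\<lambda>\<omega>. \<forall>i. i \<in> K \<omega> \<longleftrightarrow> i \<in> A)" by auto
      note mem[measurable]
      show ?thesis unfolding e by measurable
    qed
    then show ?thesis
      by (subst measurable_count_space_eq2) (auto simp: pred_def vimage_def Int_def Collect_conj_eq[symmetric] conj_commute)
  qed
  have AEfin: "AE \<omega> in M. finite (ST (RS Act (\<lambda>i. q i \<omega>)) t)"
  proof -
    have AE1: "AE \<omega> in M. \<exists>K. \<forall>k\<ge>K. t < q (e,k) \<omega>" if e: "e \<in> Act" for e
    proof -
      obtain a b where eab: "e = (a, b)" by (cases e)
      have ab: "a \<noteq> b" "0 < r a b" using e by (auto simp: eab Act_def)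
      have "AE \<omega> in M. \<exists>K. \<forall>k\<ge>K. t < (\<Sum>j\<le>k. (\<lambda>(x, y, k). tau x y k) ((\<lambda>k. (a, b, k)) j) \<omega>)"
      proof (rule ae_psum_big[OF indep_tau])
        show "inj (\<lambda>k. (a, b, k))" by (simp add: inj_on_def)
        show "range (\<lambda>k. (a, b, k)) \<subseteq> {(x, y, k). x \<noteq> y \<and> 0 < r x y}" using ab by auto
        show "distributed M lborel ((\<lambda>(x, y, k). tau x y k) ((\<lambda>k. (a, b, k)) k)) (exponential_density (r a b))" for k
          using exp_interarrival[OF ab] by simp
      qed (use ab t0 in auto)
      then show ?thesis using e by (simp add: q_def eab)
    qed
    have "AE \<omega> in M. \<forall>e\<in>Act. \<exists>K. \<forall>k\<ge>K. t < q (e,k) \<omega>"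
      using AE1 by (intro AE_finite_allI) auto
    then show ?thesis
    proof (rule eventually_mono)
      fix \<omega> assume "\<forall>e\<in>Act. \<exists>K. \<forall>k\<ge>K. t < q (e,k) \<omega>"
      then obtain Kf where Kf: "\<And>e k. e \<in> Act \<Longrightarrow> Kf e \<le> k \<Longrightarrow> t < q (e,k) \<omega>" by metis
      have "ST (RS Act (\<lambda>i. q i \<omega>)) t \<subseteq> (\<Union>e\<in>Act. (\<lambda>k. q (e,k) \<omega>) ` {..<Kf e})"
      proof
        fix s assume "s \<in> ST (RS Act (\<lambda>i. q i \<omega>)) t"
        then obtain e k where ek: "e \<in> Act" "q (e,k) \<omega> = s" "s \<le> t" by (auto simp: ST_RS_mem)
        then have "k < Kf e" using Kf[of e k] by (meson not_le not_less)
        then show "s \<in> (\<Union>e\<in>Act. (\<lambda>k. q (e,k) \<omega>) ` {..<Kf e})" using ek by blast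
      qed
      then show "finite (ST (RS Act (\<lambda>i. q i \<omega>)) t)" by (rule finite_subset) auto
    qed
  qed
  define H where "H \<omega> = (G \<omega>, iota \<omega>)" for \<omega>
  have HM: "H \<in> measurable M (count_space UNIV)"
  proof -
    note iota_meas[measurable]
    have "Measurable.pred M (\<lambda>\<omega>. H \<omega> = z)" for z
    proof -
      have e: "(\<lambda>\<omega>. H \<omega> = z) = (\<lambda>\<omega>. G \<omega> = fst z \<and> iota \<omega> = snd z)" by (auto simp: H_def)
      show ?thesis unfolding e by measurable
    qed
    then show ?thesis
      by (subst measurable_count_space_eq2) (auto simp: pred_def vimage_def Int_def Collect_conj_eq[symmetric] conj_commute)
  qed
  define hf where "hf z = 1 / real (card {i. fst z i = fst z (snd z)})" for z :: "('a \<Rightarrow> 'a) \<times> 'a"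
  have RHS1: "(\<integral>\<omega>. 1 / real (card (K \<omega>)) \<partial>M) = (\<integral>\<omega>. hf (H \<omega>) \<partial>M)"
  proof (rule integral_cong_AE)
    show "(\<lambda>\<omega>. 1 / real (card (K \<omega>))) \<in> borel_measurable M"
      by (rule measurable_compose[OF KM]) simp
    show "(\<lambda>\<omega>. hf (H \<omega>)) \<in> borel_measurable M"
      by (rule measurable_compose[OF HM]) simp
    show "AE \<omega> in M. 1 / real (card (K \<omega>)) = hf (H \<omega>)"
      using AEfin
    proof (rule eventually_mono)
      fix \<omega> assume fin: "finite (ST (RS Act (\<lambda>i. q i \<omega>)) t)"
      have "K \<omega> = {i. G \<omega> i = G \<omega> (iota \<omega>)}"
        unfolding K_def G_def using coal_le_iff[OF fin t0] by simp
      then show "1 / real (card (K \<omega>)) = hf (H \<omega>)" by (simp add: hf_def H_def)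
    qed
  qed
  have RHS2: "(\<integral>\<omega>. hf (H \<omega>) \<partial>M) = (\<Sum>z\<in>UNIV. hf z * measure M (H -` {z} \<inter> space M))"
    by (rule integral_finite_rv[OF \<open>prob_space M\<close> HM])
  have probH: "measure M (H -` {(\<phi>, v)} \<inter> space M) = P \<phi> / n" for \<phi> v
  proof -
    have e: "H -` {(\<phi>, v)} \<inter> space M = (iota -` {v} \<inter> space M) \<inter> (G -` {\<phi>} \<inter> space M)"
      by (auto simp: H_def)
    have a: "iota -` {v} \<inter> space M \<in> sigma_sets (space M) {iota -` {v} \<inter> space M | v. True}"
      by (rule sigma_sets.Basic) blast
    have "measure M (H -` {(\<phi>, v)} \<inter> space M) = prob (iota -` {v} \<inter> space M) * prob (G -` {\<phi>} \<inter> space M)"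
      unfolding e by (rule indep_setD[OF iota_indep[folded Gen_def] a Gsets])
    moreover have "prob (iota -` {v} \<inter> space M) = 1 / n"
      using iota_unif[of v] by (simp add: n_def vimage_def Int_def conj_commute Collect_conj_eq[symmetric])
    ultimately show ?thesis by (simp add: P_def)
  qed
  have probH': "measure M (H -` {z} \<inter> space M) = P (fst z) / n" for z
    using probH[of "fst z" "snd z"] by simp
  have "(\<Sum>z\<in>UNIV. hf z * measure M (H -` {z} \<inter> space M))
      = (\<Sum>\<phi>\<in>UNIV. \<Sum>v\<in>UNIV. hf (\<phi>, v) * (P \<phi> / n))"
    by (simp add: UNIV_Times_UNIV[symmetric] sum.cartesian_product split_beta probH' del: UNIV_Times_UNIV)
  also have "\<dots> = (\<Sum>\<phi>\<in>UNIV. (P \<phi> / n) * (\<Sum>v\<in>UNIV. 1 / real (card {i. \<phi> i = \<phi> v})))"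
    by (simp add: hf_def sum_distrib_left mult.commute)
  also have "\<dots> = (\<Sum>\<phi>\<in>UNIV. real (card (range \<phi>)) * P \<phi>) / n"
    by (simp add: fiber_sum sum_divide_distrib mult.commute)
  finally show ?thesis using LHS RHS0 RHS1 RHS2 by (simp add: n_def)
qed

end
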